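(* There exist instances of Bin Packing with Usage Cost for which $z_2^*>z_3^*$, where $z_2^*$ and $z_3^*$ are defined as follows. An instance consists of items whose distinct sizes are the positive integers $w'_1,\dots,w'_{n'}$, with $q_d\ge1$ items of size $w'_d$, and $m$ bins, bin $j$ having positive integer capacity $C_j$, fixed cost $f_j\ge 0$ and unit cost $c_j\ge 0$; $C_{\max}=\max_jC_j$. $z_2^*$ (cutting-stock relaxation): for each bin $j$, a pattern is an integer vector $g=(g_1,\dots,g_{n'})$ with $0\le g_d\le q_d$ and $\sum_d g_dw'_d\le C_j$; $I_j$ is the set of all patterns for bin $j$, the $i$-th pattern of bin $j$ being $(g_{1ij},\dots,g_{n'ij})$, with cost $co_{ij}=f_j+c_j\sum_d g_{dij}w'_d$ if nonzero and $co_{ij}=0$ if zero. $z_2^*=\min\sum_{j}\sum_{i\in I_j}co_{ij}p_{ij}$ subject to $\sum_{j}\sum_{i\in I_j}g_{dij}p_{ij}=q_d$ for all $d$, $\sum_{i\in I_j}p_{ij}=1$ for all $j$, $p_{ij}\ge0$. $z_3^*$ (arc-flow relaxation): let $I$ be the set of arcs $(a,a+w'_d)$ with $a\ge0$ integer and $a+w'_d\le C_{\max}$, with variables $x_{ab}\ge0$ for $(a,b)\in I$ and $y_{aj}\in[0,1]$ for each bin $j$ and $a\in\{0,\dots,C_{\max}\}$, with costs $co_{aj}=f_j+a\,c_j$ for $a>0$ and $co_{0j}=0$. $z_3^*=\min\sum_j\sum_{a}co_{aj}y_{aj}$ subject to: $\sum_{(a,b)\in I}x_{ab}-\sum_{(b,c)\in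 I}x_{bc}-\sum_j y_{bj}=0$ for every $b\in\{1,\dots,C_{\max}\}$; $-\sum_{(0,c)\in I}x_{0c}-\sum_j y_{0j}=-m$; $\sum_{a=0}^{C_j}y_{aj}=1$ for every $j$; $\sum_{(a,a+w'_d)\in I}x_{a,a+w'_d}=q_d$ for every $d$; $y_{aj}=0$ for all $j$ and $a\in\{C_j+1,\dots,C_{\max}\}$.
   Context: Bin Packing with Usage Cost: each item must be assigned to exactly one bin, the total size $l_j$ of the items in bin $j$ may not exceed $C_j$, a bin is used if it contains at least one item, a used bin $j$ costs $f_j+c_jl_j$, and the total cost is to be minimised. The two programs above are linear relaxations of exact integer formulations of this problem. *)

theory Defs
  imports Complex_Main
begin

definition valid_instance ::
  "nat \<Rightarrow> (nat \<Rightarrow> nat) \<Rightarrow> (nat \<Rightarrow> nat) \<Rightarrow> nat \<Rightarrow> (nat \<Rightarrow> nat) \<Rightarrow> (nat \<Rightarrow> real) \<Rightarrow> (nat \<Rightarrow> real) \<Rightarrow> bool"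
  where "valid_instance n' w q m C f c \<longleftrightarrow>
     m \<ge> 1 \<and> inj_on w {..<n'} \<and> (\<forall>d<n'. w d > 0 \<and> q d \<ge> 1) \<and>
     (\<forall>j<m. C j > 0 \<and> f j \<ge> 0 \<and> c j \<ge> 0)"

definition Cmax :: "nat \<Rightarrow> (nat \<Rightarrow> nat) \<Rightarrow> nat"
  where "Cmax m C = Max (C ` {..<m})"

definition patterns :: "nat \<Rightarrow> (nat \<Rightarrow> nat) \<Rightarrow> (nat \<Rightarrow> nat) \<Rightarrow> nat \<Rightarrow> (nat \<Rightarrow> nat) set"
  where "patterns n' w q Cj = {g. (\<forall>d<n'. g d \<le> q d) \<and> (\<forall>d\<ge>n'. g d = 0)
                                  \<and> (\<Sum>d<n'. g d * w d) \<le> Cj}"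

definition pattern_cost :: "nat \<Rightarrow> (nat \<Rightarrow> nat) \<Rightarrow> real \<Rightarrow> real \<Rightarrow> (nat \<Rightarrow> nat) \<Rightarrow> real"
  where "pattern_cost n' w fj cj g =
     (if (\<forall>d<n'. g d = 0) then 0 else fj + cj * real (\<Sum>d<n'. g d * w d))"

definition z2_feasible ::
  "nat \<Rightarrow> (nat \<Rightarrow> nat) \<Rightarrow> (nat \<Rightarrow> nat) \<Rightarrow> nat \<Rightarrow> (nat \<Rightarrow> nat) \<Rightarrow> (nat \<Rightarrow> (nat \<Rightarrow> nat) \<Rightarrow> real) \<Rightarrow> bool"
  where "z2_feasible n' w q m C p \<longleftrightarrow>
     (\<forall>j<m. \<forall>g\<in>patterns n' w q (C j). p j g \<ge> 0) \<and>
     (\<forall>d<n'. (\<Sum>j<m. \<Sum>g\<in>patterns n' w q (C j). real (g d) * p j g) = real (q d)) \<and>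
     (\<forall>j<m. (\<Sum>g\<in>patterns n' w q (C j). p j g) = 1)"

definition z2_obj ::
  "nat \<Rightarrow> (nat \<Rightarrow> nat) \<Rightarrow> (nat \<Rightarrow> nat) \<Rightarrow> nat \<Rightarrow> (nat \<Rightarrow> nat) \<Rightarrow> (nat \<Rightarrow> real) \<Rightarrow> (nat \<Rightarrow> real)
     \<Rightarrow> (nat \<Rightarrow> (nat \<Rightarrow> nat) \<Rightarrow> real) \<Rightarrow> real"
  where "z2_obj n' w q m C f c p =
     (\<Sum>j<m. \<Sum>g\<in>patterns n' w q (C j). pattern_cost n' w (f j) (c j) g * p j g)"

definition z2_star ::
  "nat \<Rightarrow> (nat \<Rightarrow> nat) \<Rightarrow> (nat \<Rightarrow> nat) \<Rightarrow> nat \<Rightarrow> (nat \<Rightarrow> nat) \<Rightarrow> (nat \<Rightarrow> real) \<Rightarrow> (nat \<Rightarrow> real) \<Rightarrow> real"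
  where "z2_star n' w q m C f c =
     Inf {z2_obj n' w q m C f c p | p. z2_feasible n' w q m C p}"

definition arcs :: "nat \<Rightarrow> (nat \<Rightarrow> nat) \<Rightarrow> nat \<Rightarrow> (nat \<times> nat) set"
  where "arcs n' w K = {(a, a + w d) | a d. d < n' \<and> a + w d \<le> K}"

definition arc_cost :: "real \<Rightarrow> real \<Rightarrow> nat \<Rightarrow> real"
  where "arc_cost fj cj a = (if a = 0 then 0 else fj + real a * cj)"

definition z3_feasible ::
  "nat \<Rightarrow> (nat \<Rightarrow> nat) \<Rightarrow> (nat \<Rightarrow> nat) \<Rightarrow> nat \<Rightarrow> (nat \<Rightarrow> nat)
     \<Rightarrow> (nat \<times> nat \<Rightarrow> real) \<Rightarrow> (nat \<Rightarrow> nat \<Rightarrow> real) \<Rightarrow> bool"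
  where "z3_feasible n' w q m C x y \<longleftrightarrow>
    (let K = Cmax m C; I = arcs n' w K in
     (\<forall>e\<in>I. x e \<ge> 0) \<and>
     (\<forall>j<m. \<forall>a\<le>K. 0 \<le> y a j \<and> y a j \<le> 1) \<and>
     (\<forall>b\<in>{1..K}. (\<Sum>e\<in>{e\<in>I. snd e = b}. x e) - (\<Sum>e\<in>{e\<in>I. fst e = b}. x e)
                    - (\<Sum>j<m. y b j) = 0) \<and>
     - (\<Sum>e\<in>{e\<in>I. fst e = 0}. x e) - (\<Sum>j<m. y 0 j) = - real m \<and>
     (\<forall>j<m. (\<Sum>a=0..C j. y a j) = 1) \<and>
     (\<forall>d<n'. (\<Sum>e\<in>{e\<in>I. snd e = fst e + w d}. x e) = real (q d)) \<and>
     (\<forall>j<m. \<forall>a. C j < a \<and> a \<le> K \<longrightarrow> y a j = 0))"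

definition z3_obj ::
  "nat \<Rightarrow> (nat \<Rightarrow> nat) \<Rightarrow> (nat \<Rightarrow> real) \<Rightarrow> (nat \<Rightarrow> real) \<Rightarrow> (nat \<Rightarrow> nat \<Rightarrow> real) \<Rightarrow> real"
  where "z3_obj m C f c y = (\<Sum>j<m. \<Sum>a=0..Cmax m C. arc_cost (f j) (c j) a * y a j)"

definition z3_star ::
  "nat \<Rightarrow> (nat \<Rightarrow> nat) \<Rightarrow> (nat \<Rightarrow> nat) \<Rightarrow> nat \<Rightarrow> (nat \<Rightarrow> nat) \<Rightarrow> (nat \<Rightarrow> real) \<Rightarrow> (nat \<Rightarrow> real) \<Rightarrow> real"
  where "z3_star n' w q m C f c =
     Inf {z3_obj m C f c y | x y. z3_feasible n' w q m C x y}"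

end

theory Submission
  imports Defs
begin

definition g0 :: "nat \<Rightarrow> nat" where "g0 = (\<lambda>_. 0)"
definition g1 :: "nat \<Rightarrow> nat" where "g1 = (\<lambda>d. if d = 0 then 1 else 0)"

lemma g01: "g0 \<noteq> g1" unfolding g0_def g1_def by (metis zero_neq_one)

lemma pats: "patterns 1 (\<lambda>_. 1) (\<lambda>_. 1) 2 = {g0, g1}"
proof (rule set_eqI, rule iffI)
  fix g assume "g \<in> patterns 1 (\<lambda>_. 1) (\<lambda>_. 1) 2"
  hence a: "g 0 \<le> 1" "\<forall>d\<ge>1. g d = 0" by (auto simp: patterns_def)
  show "g \<in> {g0, g1}"
  proof (cases "g 0 = 0")
    case True
    have "g d = 0" for d using a True by (cases d) auto
    hence "g = g0" by (auto simp: g0_def fun_eq_iff)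
    thus ?thesis by simp
  next
    case False
    hence "g 0 = 1" using a by simp
    hence "g = g1" using a by (auto simp: g1_def fun_eq_iff)
    thus ?thesis by simp
  qed
next
  fix g assume "g \<in> {g0, g1}"
  thus "g \<in> patterns 1 (\<lambda>_. 1) (\<lambda>_. 1) 2"
    by (auto simp: patterns_def g0_def g1_def)
qed

lemma cmax: "Cmax 1 (\<lambda>_. 2) = 2" by (simp add: Cmax_def lessThan_Suc)

lemma arcs_eq: "arcs 1 (\<lambda>_. 1) 2 = {(0,1),(1,2)}"
  unfolding arcs_def by auto

lemma z2obj: "z2_feasible 1 (\<lambda>_. 1) (\<lambda>_. 1) 1 (\<lambda>_. 2) p \<Longrightarrow>
   z2_obj 1 (\<lambda>_. 1) (\<lambda>_. 1) 1 (\<lambda>_. 2) (\<lambda>_. 1) (\<lambda>_. 0) p = 1"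
  unfolding z2_feasible_def z2_obj_def pats
  using g01 by (simp add: pattern_cost_def g0_def g1_def)

theorem proposition4:
  "\<exists>n' w q m C f c.
     valid_instance n' w q m C f c \<and>
     (\<exists>p. z2_feasible n' w q m C p) \<and>
     (\<exists>x y. z3_feasible n' w q m C x y) \<and>
     z2_star n' w q m C f c > z3_star n' w q m C f c"
proof -
  let ?n = "1::nat" and ?w = "\<lambda>_::nat. 1::nat" and ?q = "\<lambda>_::nat. 1::nat" and ?m = "1::nat"
    and ?C = "\<lambda>_::nat. 2::nat" and ?f = "\<lambda>_::nat. 1::real" and ?c = "\<lambda>_::nat. 0::real"
  define p :: "nat \<Rightarrow> (nat \<Rightarrow> nat) \<Rightarrow> real" where "p = (\<lambda>j g. if g = g1 then 1 else 0)"
  define x :: "nat \<times> nat \<Rightarrow> real" where "x = (\<lambda>_. 1/2)"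
  define y :: "nat \<Rightarrow> nat \<Rightarrow> real" where "y = (\<lambda>a j. if a = 0 \<or> a = 2 then 1/2 else 0)"
  have v: "valid_instance ?n ?w ?q ?m ?C ?f ?c" by (simp add: valid_instance_def lessThan_Suc)
  have pf: "z2_feasible ?n ?w ?q ?m ?C p"
    unfolding z2_feasible_def pats p_def using g01 by (simp add: g0_def g1_def)
  have s1: "{e \<in> {(0::nat,1::nat),(1,2)}. snd e = 1} = {(0,1)}" by auto
  have s2: "{e \<in> {(0::nat,1::nat),(1,2)}. snd e = 2} = {(1,2)}" by auto
  have s3: "{e \<in> {(0::nat,1::nat),(1,2)}. fst e = 1} = {(1,2)}" by auto
  have s4: "{e \<in> {(0::nat,1::nat),(1,2)}. fst e = 2} = {}" by auto
  have s5: "{e \<in> {(0::nat,1::nat),(1,2)}. fst e = 0} = {(0,1)}" by auto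
  have s6: "{e \<in> {(0::nat,1::nat),(1,2)}. snd e = fst e + 1} = {(0,1),(1,2)}" by auto
  have ab: "\<forall>b\<in>{1..2::nat}. b = 1 \<or> b = 2" by auto
  have r: "{0..2::nat} = {0,1,2}" by auto
  have xf: "z3_feasible ?n ?w ?q ?m ?C x y"
  proof -
    let ?I = "{(0::nat,1::nat),(1,2)}"
    have c1: "\<forall>b\<in>{1..2}. (\<Sum>e\<in>{e\<in>?I. snd e = b}. x e) - (\<Sum>e\<in>{e\<in>?I. fst e = b}. x e)
                    - (\<Sum>j<1. y b j) = 0"
    proof
      fix b :: nat assume "b \<in> {1..2}"
      hence "b = 1 \<or> b = 2" by auto
      thus "(\<Sum>e\<in>{e\<in>?I. snd e = b}. x e) - (\<Sum>e\<in>{e\<in>?I. fst e = b}. x e)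
                    - (\<Sum>j<1. y b j) = 0"
        by (elim disjE) (simp_all only: s1 s2 s3 s4, simp_all add: x_def y_def)
    qed
    have c2: "- (\<Sum>e\<in>{e\<in>?I. fst e = 0}. x e) - (\<Sum>j<1. y 0 j) = - real 1"
      by (simp only: s5, simp add: x_def y_def)
    have c3: "\<forall>d<1. (\<Sum>e\<in>{e\<in>?I. snd e = fst e + 1}. x e) = real 1"
      by (simp only: s6, simp add: x_def)
    show ?thesis
      unfolding z3_feasible_def Let_def cmax arcs_eq
      using c1 c2 c3 by (auto simp: x_def y_def r)
  qed
  have yobj: "z3_obj ?m ?C ?f ?c y = 1/2"
    unfolding z3_obj_def cmax by (simp add: r arc_cost_def y_def)
  have z2: "z2_star ?n ?w ?q ?m ?C ?f ?c = 1"
  proof -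
    have "{z2_obj ?n ?w ?q ?m ?C ?f ?c p | p. z2_feasible ?n ?w ?q ?m ?C p} = {1}"
      using pf z2obj by (auto, blast)
    thus ?thesis by (simp add: z2_star_def)
  qed
  have z3: "z3_star ?n ?w ?q ?m ?C ?f ?c \<le> 1/2"
  proof -
    have bdd: "bdd_below {z3_obj ?m ?C ?f ?c y | x y. z3_feasible ?n ?w ?q ?m ?C x y}"
    proof (rule bdd_belowI[of _ 0], clarify)
      fix x' y' assume "z3_feasible ?n ?w ?q ?m ?C x' y'"
      hence "\<forall>a\<le>2. 0 \<le> y' a 0" unfolding z3_feasible_def Let_def cmax by auto
      thus "0 \<le> z3_obj ?m ?C ?f ?c y'"
        unfolding z3_obj_def cmax by (simp add: r arc_cost_def)
    qed
    have "z3_obj ?m ?C ?f ?c y \<in> {z3_obj ?m ?C ?f ?c y | x y. z3_feasible ?n ?w ?q ?m ?C x y}"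
      using xf by blast
    from cInf_lower[OF this bdd] show ?thesis using yobj by (simp add: z3_star_def)
  qed
  show ?thesis
    apply (rule exI[of _ ?n], rule exI[of _ ?w], rule exI[of _ ?q], rule exI[of _ ?m],
           rule exI[of _ ?C], rule exI[of _ ?f], rule exI[of _ ?c])
    using v pf xf z2 z3 by auto
qed

end
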